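(* Let $K,L\ (\le K),F,Z,S,g$ be positive integers and let $\mathbf{A}$ be a $g$-regular $(K,L,F,Z,S)$ EPDA. Then the multi-antenna coded caching scheme obtained from $\mathbf{A}$ (with delivery time $T=\frac{S}{F}$) satisfies $$T=\frac{K}{g}\left(1-\frac{Z}{F}\right),$$ and moreover $$g\le L+\frac{KZ}{F}.$$ In particular, if $\frac{Z}{F}=\frac{t}{K}$ for an integer $t$, then $g\le t+L$.
   Context: Notation: $[n]=\{1,\dots,n\}$. An $F\times K$ array $\mathbf{A}=[a_{j,k}]$ with entries either a symbol $\star$ or integers in $[S]$ is a $(K,L,F,Z,S)$ EPDA if: (C1) $\star$ appears exactly $Z$ times in each column; (C2) every integer in $[S]$ occurs at least once; (C3) no integer appears more than once in any column; (C4) for each $s\in[S]$, letting $\mathbf{A}^{(s)}$ be the subarray obtained by deleting all rows and columns of $\mathbf{A}$ not containing $s$, no row of $\mathbf{A}^{(s)}$ contains more than $L$ integer entries. The EPDA is $g$-regular if, in addition, each integer in $[S]$ appears exactly $g$ times in $\mathbf{A}$. The multi-antenna coded caching scheme obtained from an EPDA splits each file into $F$ subfiles, and makes one transmission of size $1/F$ file per integer $s\in[S]$, so its delivery time is $T=S/F$. *)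

theory Defs
  imports Main "HOL.Real"
begin

text \<open>An F x K array with rows indexed by j < F and columns by k < K.
  Entry None represents the star symbol, Some s an integer entry s.\<close>
type_synonym array = "nat \<Rightarrow> nat \<Rightarrow> nat option"

definition rows_with :: "array \<Rightarrow> nat \<Rightarrow> nat \<Rightarrow> nat \<Rightarrow> nat set" where
  "rows_with A F K s = {j. j < F \<and> (\<exists>k<K. A j k = Some s)}"

definition cols_with :: "array \<Rightarrow> nat \<Rightarrow> nat \<Rightarrow> nat \<Rightarrow> nat set" where
  "cols_with A F K s = {k. k < K \<and> (\<exists>j<F. A j k = Some s)}"

definition EPDA :: "nat \<Rightarrow> nat \<Rightarrow> nat \<Rightarrow> nat \<Rightarrow> nat \<Rightarrow> array \<Rightarrow> bool" where
  "EPDA K L F Z S A \<longleftrightarrow>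
     \<comment> \<open>entries are star or integers in [S]\<close>
     (\<forall>j<F. \<forall>k<K. \<forall>s. A j k = Some s \<longrightarrow> s \<in> {1..S}) \<and>
     \<comment> \<open>(C1)\<close>
     (\<forall>k<K. card {j. j < F \<and> A j k = None} = Z) \<and>
     \<comment> \<open>(C2)\<close>
     (\<forall>s\<in>{1..S}. \<exists>j<F. \<exists>k<K. A j k = Some s) \<and>
     \<comment> \<open>(C3)\<close>
     (\<forall>k<K. \<forall>j1<F. \<forall>j2<F. \<forall>s. A j1 k = Some s \<and> A j2 k = Some s \<longrightarrow> j1 = j2) \<and>
     \<comment> \<open>(C4)\<close>
     (\<forall>s\<in>{1..S}. \<forall>j\<in>rows_with A F K s.
        card {k \<in> cols_with A F K s. A j k \<noteq> None} \<le> L)"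

definition regular_EPDA :: "nat \<Rightarrow> nat \<Rightarrow> nat \<Rightarrow> nat \<Rightarrow> nat \<Rightarrow> nat \<Rightarrow> array \<Rightarrow> bool" where
  "regular_EPDA g K L F Z S A \<longleftrightarrow> EPDA K L F Z S A \<and>
     (\<forall>s\<in>{1..S}. card {(j, k). j < F \<and> k < K \<and> A j k = Some s} = g)"

definition delivery_time :: "nat \<Rightarrow> nat \<Rightarrow> real" where
  "delivery_time F S = real S / real F"

end

theory Submission
  imports Defs
begin

lemma card_pairs_rows:
  "card {(j, k). j < F \<and> k < (K::nat) \<and> Q j k} = (\<Sum>j<(F::nat). card {k. k < K \<and> Q j k})"
proof -
  have "{(j, k). j < F \<and> k < K \<and> Q j k} = Sigma {..<F} (\<lambda>j. {k. k < K \<and> Q j k})" by auto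
  then show ?thesis by (simp add: card_SigmaI)
qed

lemma card_pairs_cols:
  "card {(j, k). j < F \<and> k < (K::nat) \<and> Q j k} = (\<Sum>k<(K::nat). card {j. j < (F::nat) \<and> Q j k})"
proof -
  have "{(j, k). j < F \<and> k < K \<and> Q j k} = (\<lambda>(k,j). (j,k)) ` Sigma {..<K} (\<lambda>k. {j. j < F \<and> Q j k})" by auto
  moreover have "inj_on (\<lambda>(k,j). (j::nat,k::nat)) X" for X by (auto simp: inj_on_def)
  ultimately show ?thesis by (simp add: card_image card_SigmaI)
qed

lemma card_g_le_K:
  assumes "\<forall>k<K. \<forall>j1<F. \<forall>j2<F. \<forall>s. A j1 k = Some s \<and> A j2 k = Some s \<longrightarrow> j1 = j2"
  shows "card {(j, k). j < F \<and> k < (K::nat) \<and> A j k = Some s} = card (cols_with A F K s)"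
proof -
  have i: "inj_on snd {(j, k). j < F \<and> k < (K::nat) \<and> A j k = Some s}"
  proof (rule inj_onI)
    fix x y assume xm: "x \<in> {(j, k). j < F \<and> k < (K::nat) \<and> A j k = Some s}"
      and ym: "y \<in> {(j, k). j < F \<and> k < (K::nat) \<and> A j k = Some s}" and sn: "snd x = snd y"
    obtain a b where x: "x = (a, b)" by (cases x)
    obtain c d where y: "y = (c, d)" by (cases y)
    have h1: "a < F" "b < K" "A a b = Some s" using xm unfolding x by simp_all
    have h2: "c < F" "d = b" "A c b = Some s" using ym sn unfolding x y by simp_all
    note h = h1 h2
    have "a = c" by (rule assms[rule_format, of b a c s]) (simp_all add: h)
    then show "x = y" using x y h by simp
  qed
  have "snd ` {(j, k). j < F \<and> k < (K::nat) \<and> A j k = Some s} = cols_with A F K s"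
  proof
    show "snd ` {(j, k). j < F \<and> k < (K::nat) \<and> A j k = Some s} \<subseteq> cols_with A F K s"
      unfolding cols_with_def by auto
    show "cols_with A F K s \<subseteq> snd ` {(j, k). j < F \<and> k < (K::nat) \<and> A j k = Some s}"
    proof
      fix k assume "k \<in> cols_with A F K s"
      then obtain j where "j < F" "k < K" "A j k = Some s" unfolding cols_with_def by blast
      then have "(j, k) \<in> {(j, k). j < F \<and> k < (K::nat) \<and> A j k = Some s}" by simp
      then show "k \<in> snd ` {(j, k). j < F \<and> k < (K::nat) \<and> A j k = Some s}"
        by (rule rev_image_eqI) simp
    qed
  qed
  then show ?thesis using card_image[OF i] by simp
qed

theorem lemma3:
  fixes K L F Z S g :: nat and A :: array
  assumes "K > 0" "L > 0" "F > 0" "Z > 0" "S > 0" "g > 0" "L \<le> K"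
    and "regular_EPDA g K L F Z S A"
  shows "delivery_time F S = real K / real g * (1 - real Z / real F) \<and>
         real g \<le> real L + real K * real Z / real F \<and>
         (\<forall>t::int. real Z / real F = real_of_int t / real K \<longrightarrow> int g \<le> t + int L)"
proof -
  note R = assms(8)[unfolded regular_EPDA_def EPDA_def]
  have rng: "\<forall>j<F. \<forall>k<K. \<forall>s. A j k = Some s \<longrightarrow> s \<in> {1..S}" using R by blast
  have C1: "\<forall>k<K. card {j. j < F \<and> A j k = None} = Z" using R by blast
  have C3: "\<forall>k<K. \<forall>j1<F. \<forall>j2<F. \<forall>s. A j1 k = Some s \<and> A j2 k = Some s \<longrightarrow> j1 = j2" using R by blast
  have C4: "\<forall>s\<in>{1..S}. \<forall>j\<in>rows_with A F K s.
        card {k \<in> cols_with A F K s. A j k \<noteq> None} \<le> L" using R by blast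
  have reg: "\<forall>s\<in>{1..S}. card {(j, k). j < F \<and> k < K \<and> A j k = Some s} = g" using R by blast
  have ZF: "Z \<le> F"
  proof -
    have "card {j. j < F \<and> A j 0 = None} \<le> card {..<F}" by (rule card_mono) auto
    then show ?thesis using C1 assms(1) by auto
  qed
  have colint: "card {j. j < F \<and> A j k \<noteq> None} = F - Z" if "k < K" for k
  proof -
    have "{..<F} = {j. j < F \<and> A j k \<noteq> None} \<union> {j. j < F \<and> A j k = None}" by auto
    moreover have "card ({j. j < F \<and> A j k \<noteq> None} \<union> {j. j < F \<and> A j k = None}) =
       card {j. j < F \<and> A j k \<noteq> None} + card {j. j < F \<and> A j k = None}"
      by (rule card_Un_disjoint) auto
    ultimately have "F = card {j. j < F \<and> A j k \<noteq> None} + card {j. j < F \<and> A j k = None}"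
      by (metis card_lessThan)
    then show ?thesis using C1 that by simp
  qed
  define P where "P = {(j, k). j < F \<and> k < K \<and> A j k \<noteq> None}"
  have cP1: "card P = K * (F - Z)"
    unfolding P_def card_pairs_cols using colint by simp
  have Pun: "P = (\<Union>s\<in>{1..S}. {(j, k). j < F \<and> k < K \<and> A j k = Some s})"
    unfolding P_def using rng by auto
  have "card P = (\<Sum>s\<in>{1..S}. card {(j, k). j < F \<and> k < K \<and> A j k = Some s})"
    unfolding Pun
  proof (rule card_UN_disjoint)
    show "\<forall>i\<in>{1..S}. finite {(j, k). j < F \<and> k < K \<and> A j k = Some i}"
    proof
      fix i
      show "finite {(j, k). j < F \<and> k < K \<and> A j k = Some i}"
        by (rule finite_subset[of _ "{..<F} \<times> {..<K}"]) auto
    qed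
  qed auto
  also have "\<dots> = S * g" using reg by simp
  finally have SgK: "S * g = K * (F - Z)" using cP1 by simp
  have p1: "delivery_time F S = real K / real g * (1 - real Z / real F)"
  proof -
    have "real (S * g) = real (K * (F - Z))" using SgK by (simp only:)
    then have "real S * real g = real K * (real F - real Z)"
      using ZF by (simp add: of_nat_diff)
    then show ?thesis using assms(3,6) unfolding delivery_time_def
      by (simp add: field_simps)
  qed
  have gK: "g \<le> K"
  proof -
    have "g = card (cols_with A F K 1)" using reg card_g_le_K[OF C3, of 1] assms(5) by simp
    also have "\<dots> \<le> card {..<K}" by (rule card_mono) (auto simp: cols_with_def)
    finally show ?thesis by simp
  qed
  have rowstars: "g - L \<le> card {k. k < K \<and> A j k = None}" if "j < F" for j
  proof (cases "\<exists>k<K. A j k \<noteq> None")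
    case False
    then have "{k. k < K \<and> A j k = None} = {..<K}" by auto
    then show ?thesis using gK by simp
  next
    case True
    then obtain k0 s where k0: "k0 < K" "A j k0 = Some s" by auto
    have s: "s \<in> {1..S}" using rng k0 that by blast
    have jr: "j \<in> rows_with A F K s" using k0 that by (auto simp: rows_with_def)
    have cg: "card (cols_with A F K s) = g" using card_g_le_K[OF C3] reg s by simp
    have fin: "finite (cols_with A F K s)" by (rule finite_subset[of _ "{..<K}"]) (auto simp: cols_with_def)
    have "cols_with A F K s = {k \<in> cols_with A F K s. A j k \<noteq> None} \<union> {k \<in> cols_with A F K s. A j k = None}" by auto
    moreover have "card ({k \<in> cols_with A F K s. A j k \<noteq> None} \<union> {k \<in> cols_with A F K s. A j k = None})
       = card {k \<in> cols_with A F K s. A j k \<noteq> None} + card {k \<in> cols_with A F K s. A j k = None}"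
      by (rule card_Un_disjoint) (use fin in auto)
    ultimately have "g = card {k \<in> cols_with A F K s. A j k \<noteq> None} + card {k \<in> cols_with A F K s. A j k = None}"
      using cg by simp
    moreover have "card {k \<in> cols_with A F K s. A j k \<noteq> None} \<le> L" using C4 s jr by blast
    moreover have "card {k \<in> cols_with A F K s. A j k = None} \<le> card {k. k < K \<and> A j k = None}"
      by (rule card_mono) (auto simp: cols_with_def)
    ultimately show ?thesis by linarith
  qed
  have "F * (g - L) \<le> (\<Sum>j<F. card {k. k < K \<and> A j k = None})"
    using sum_mono[of "{..<F}" "\<lambda>_. g - L" "\<lambda>j. card {k. k < K \<and> A j k = None}"] rowstars by simp
  also have "\<dots> = card {(j, k). j < F \<and> k < K \<and> A j k = None}" by (rule card_pairs_rows[symmetric])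
  also have "\<dots> = K * Z" unfolding card_pairs_cols using C1 by simp
  finally have FgL: "F * (g - L) \<le> K * Z" .
  have p2: "real g \<le> real L + real K * real Z / real F"
  proof -
    have "real F * real g \<le> real F * real L + real K * real Z"
    proof (cases "L \<le> g")
      case True
      have "real (F * (g - L)) \<le> real (K * Z)" using FgL by (simp only: of_nat_le_iff)
      then have "real F * (real g - real L) \<le> real K * real Z" using True
        by (simp add: of_nat_diff)
      then show ?thesis by (simp add: algebra_simps)
    next
      case False
      then have "real F * real g \<le> real F * real L" by (simp add: mult_left_mono)
      moreover have "0 \<le> real K * real Z" by simp
      ultimately show ?thesis by linarith
    qed
    then show ?thesis using assms(3) by (simp add: field_simps)
  qed
  have p3: "\<forall>t::int. real Z / real F = real_of_int t / real K \<longrightarrow> int g \<le> t + int L"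
  proof (intro allI impI)
    fix t :: int
    assume h: "real Z / real F = real_of_int t / real K"
    have "real K * real Z / real F = real_of_int t" using h assms(1,3)
      by (simp add: field_simps)
    then have "real g \<le> real L + real_of_int t" using p2 by simp
    then show "int g \<le> t + int L" by linarith
  qed
  show ?thesis using p1 p2 p3 by blast
qed

end
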